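(* Let $X$ be a random variable taking values in $\mathbb{R}^n$ with a density $f$ with respect to Lebesgue measure, let $\varphi:\mathbb{R}^n\to\mathbb{R}$ be a measurable function, and let $a,b>0$. Assume $\mathbb{E}\, e^{\alpha\varphi(X)}<\infty$ for all $\alpha\in(-a,b)$. Let $c:(-a,b)\to\mathbb{R}$ be a smooth function such that the function $\alpha\mapsto e^{-c(\alpha)}\,\mathbb{E}\, e^{\alpha\varphi(X)}$ is log-concave on $(-a,b)$. Then for every $\alpha\in(-a,b)$, $$\mathbb{E}\, e^{\alpha(\varphi(X)-\mathbb{E}\varphi(X))}\le e^{\psi_c(\alpha)},\qquad\text{where } \psi_c(\alpha)=c(\alpha)-c(0)-c'(0)\alpha.$$
   Context: A function $g:I\to(0,\infty)$ on an interval $I$ is log-concave if $\log g$ is concave on $I$. *)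

theory Defs
  imports "HOL-Analysis.Analysis" "HOL-Probability.Probability"
begin

definition smooth_on :: "(real \<Rightarrow> real) \<Rightarrow> real set \<Rightarrow> bool" where
  "smooth_on c S \<longleftrightarrow> (\<forall>k. \<forall>x\<in>S. ((deriv ^^ k) c) differentiable (at x))"

definition log_concave_on :: "real set \<Rightarrow> (real \<Rightarrow> real) \<Rightarrow> bool" where
  "log_concave_on I g \<longleftrightarrow> (\<forall>x\<in>I. g x > 0) \<and> concave_on I (\<lambda>x. ln (g x))"

end

theory Submission
  imports Defs
begin


lemma key_pos:
  fixes H \<psi> :: "real \<Rightarrow> real" and a b t :: real
  assumes conc: "concave_on {-a<..<b} H" and a: "a>0" and b: "b>0" and H0: "H 0 = 0"
   and lb: "\<And>s. s \<in> {-a<..<b} \<Longrightarrow> H s \<ge> - \<psi> s"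
   and lim: "((\<lambda>y. \<psi> y / y) \<longlongrightarrow> 0) (at_left 0)"
   and t: "t \<in> {-a<..<b}" "t > 0"
  shows "H t \<le> 0"
proof (rule ccontr)
  assume "\<not> H t \<le> 0"
  hence Ht: "H t > 0" by simp
  define \<epsilon> where "\<epsilon> = H t / t"
  have \<epsilon>: "\<epsilon> > 0" using Ht t by (simp add: \<epsilon>_def)
  have ev1: "eventually (\<lambda>y. dist (\<psi> y / y) 0 < \<epsilon>) (at_left 0)"
    using lim \<epsilon> by (rule tendstoD)
  have ev2: "eventually (\<lambda>y. y \<in> {-a<..<0}) (at_left (0::real))"
    using a by (intro eventually_at_left_real) simp
  obtain s where s1: "dist (\<psi> s / s) 0 < \<epsilon>" and s2: "s \<in> {-a<..<0}"
    using eventually_happens'[OF trivial_limit_at_left_real eventually_conj[OF ev1 ev2]] by blast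
  have sI: "s \<in> {-a<..<b}" using s2 b by auto
  define u where "u = -s/(t-s)"
  have u0: "u \<ge> 0" "u \<le> 1" using s2 t by (auto simp: u_def field_simps)
  have comb: "(1 - u) *\<^sub>R s + u *\<^sub>R t = 0" using s2 t by (simp add: u_def field_simps)
  have "H ((1 - u) *\<^sub>R s + u *\<^sub>R t) \<ge> (1 - u) * H s + u * H t"
    by (rule concave_onD[OF conc u0 sI t(1)])
  hence ineq: "0 \<ge> (1 - u) * H s + u * H t" using comb H0 by simp
  have "1 - u = t/(t-s)" using s2 t by (simp add: u_def field_simps)
  moreover have "u = -s/(t-s)" by (simp add: u_def)
  ultimately have "(t * H s - s * H t)/(t-s) \<le> 0" using ineq
    by (simp add: diff_divide_distrib add_divide_distrib)
  hence "0 \<ge> t * H s - s * H t" using s2 t by (simp add: divide_le_0_iff)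
  moreover have "t * H s \<ge> - t * \<psi> s" using mult_left_mono[OF lb[OF sI], of t] t by simp
  moreover have "\<bar>\<psi> s\<bar> < \<epsilon> * (- s)" using s1 s2
    by (simp add: dist_real_def abs_divide divide_less_eq)
  moreover have "t * (\<epsilon> * (- s)) = - s * H t" using t by (simp add: \<epsilon>_def)
  moreover have "t * \<psi> s \<le> t * \<bar>\<psi> s\<bar>" using t by (simp add: mult_left_mono)
  moreover have "t * \<bar>\<psi> s\<bar> < t * (\<epsilon> * (- s))"
    using t \<open>\<bar>\<psi> s\<bar> < \<epsilon> * (- s)\<close> by (intro mult_strict_left_mono) auto
  ultimately show False by linarith
qed


lemma key_neg:
  fixes H \<psi> :: "real \<Rightarrow> real" and a b t :: real
  assumes conc: "concave_on {-a<..<b} H" and a: "a>0" and b: "b>0" and H0: "H 0 = 0"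
   and lb: "\<And>s. s \<in> {-a<..<b} \<Longrightarrow> H s \<ge> - \<psi> s"
   and lim: "((\<lambda>y. \<psi> y / y) \<longlongrightarrow> 0) (at_right 0)"
   and t: "t \<in> {-a<..<b}" "t < 0"
  shows "H t \<le> 0"
proof (rule ccontr)
  assume "\<not> H t \<le> 0"
  hence Ht: "H t > 0" by simp
  define \<epsilon> where "\<epsilon> = H t / (- t)"
  have \<epsilon>: "\<epsilon> > 0" using Ht t unfolding \<epsilon>_def by (intro divide_pos_pos) auto
  have ev1: "eventually (\<lambda>y. dist (\<psi> y / y) 0 < \<epsilon>) (at_right 0)"
    using lim \<epsilon> by (rule tendstoD)
  have ev2: "eventually (\<lambda>y. y \<in> {0<..<b}) (at_right (0::real))"
    using b by (intro eventually_at_right_real) simp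
  obtain s where s1: "dist (\<psi> s / s) 0 < \<epsilon>" and s2: "s \<in> {0<..<b}"
    using eventually_happens'[OF trivial_limit_at_right_real eventually_conj[OF ev1 ev2]] by blast
  have sI: "s \<in> {-a<..<b}" using s2 a by auto
  define u where "u = -s/(t-s)"
  have u0: "u \<ge> 0" "u \<le> 1" using s2 t by (auto simp: u_def field_simps)
  have comb: "(1 - u) *\<^sub>R s + u *\<^sub>R t = 0" using s2 t by (simp add: u_def field_simps)
  have "H ((1 - u) *\<^sub>R s + u *\<^sub>R t) \<ge> (1 - u) * H s + u * H t"
    by (rule concave_onD[OF conc u0 sI t(1)])
  hence ineq: "0 \<ge> (1 - u) * H s + u * H t" using comb H0 by simp
  have "1 - u = t/(t-s)" using s2 t by (simp add: u_def field_simps)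
  moreover have "u = -s/(t-s)" by (simp add: u_def)
  ultimately have "(t * H s - s * H t)/(t-s) \<le> 0" using ineq
    by (simp add: diff_divide_distrib add_divide_distrib)
  hence "0 \<le> t * H s - s * H t" using s2 t by (simp add: divide_le_0_iff)
  moreover have "t * H s \<le> - t * \<psi> s" using mult_left_mono_neg[OF lb[OF sI], of t] t by simp
  moreover have "\<bar>\<psi> s\<bar> < \<epsilon> * s" using s1 s2
    by (simp add: dist_real_def abs_divide divide_less_eq)
  moreover have "(- t) * (\<epsilon> * s) = s * H t" using t by (simp add: \<epsilon>_def)
  moreover have "- t * \<psi> s \<le> (- t) * \<bar>\<psi> s\<bar>" using t by (simp add: mult_left_mono)
  moreover have "(- t) * \<bar>\<psi> s\<bar> < (- t) * (\<epsilon> * s)"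
    using t \<open>\<bar>\<psi> s\<bar> < \<epsilon> * s\<close> by (intro mult_strict_left_mono) auto
  ultimately show False by linarith
qed

lemma key:
  fixes H \<psi> :: "real \<Rightarrow> real" and a b t :: real
  assumes conc: "concave_on {-a<..<b} H" and a: "a>0" and b: "b>0" and H0: "H 0 = 0"
   and lb: "\<And>s. s \<in> {-a<..<b} \<Longrightarrow> H s \<ge> - \<psi> s"
   and lim: "((\<lambda>y. \<psi> y / y) \<longlongrightarrow> 0) (at 0)"
   and t: "t \<in> {-a<..<b}"
  shows "H t \<le> 0"
proof -
  have l: "((\<lambda>y. \<psi> y / y) \<longlongrightarrow> 0) (at_left 0)" "((\<lambda>y. \<psi> y / y) \<longlongrightarrow> 0) (at_right 0)"
    using lim filterlim_at_split by blast+
  consider "t > 0" | "t < 0" | "t = 0" by linarith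
  then show ?thesis
  proof cases
    case 1 then show ?thesis using key_pos[OF conc a b H0 lb l(1) t] by blast
  next
    case 2 then show ?thesis using key_neg[OF conc a b H0 lb l(2) t] by blast
  qed (simp add: H0)
qed

lemma concave_on_add_affine:
  fixes L :: "real \<Rightarrow> real"
  assumes "concave_on S L"
  shows "concave_on S (\<lambda>x. L x + (p + q * x))"
proof -
  have cv: "convex S" and h: "\<And>x y u v. x \<in> S \<Longrightarrow> y \<in> S \<Longrightarrow> u \<ge> 0 \<Longrightarrow> v \<ge> 0 \<Longrightarrow> u + v = 1 \<Longrightarrow> u * L x + v * L y \<le> L (u *\<^sub>R x + v *\<^sub>R y)"
    using assms unfolding concave_on_iff by blast+
  show ?thesis unfolding concave_on_iff
  proof (intro conjI cv ballI allI impI)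
    fix x y u v :: real
    assume "x \<in> S" "y \<in> S" "0 \<le> u" "0 \<le> v" "u + v = 1"
    then have "u * L x + v * L y \<le> L (u *\<^sub>R x + v *\<^sub>R y)" by (rule h)
    moreover have "u * (p + q * x) + v * (p + q * y) = p + q * (u * x + v * y)"
    proof -
      have "u * (p + q * x) + v * (p + q * y) = (u + v) * p + q * (u * x + v * y)" by (simp add: algebra_simps)
      then show ?thesis using \<open>u + v = 1\<close> by simp
    qed
    ultimately show "u * (L x + (p + q * x)) + v * (L y + (p + q * y))
       \<le> L (u *\<^sub>R x + v *\<^sub>R y) + (p + q * (u *\<^sub>R x + v *\<^sub>R y))"
      by (simp add: algebra_simps)
  qed
qed

theorem lemma2p3:
  fixes M :: "'s measure" and X :: "'s \<Rightarrow> real ^ 'n"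
    and f :: "real ^ 'n \<Rightarrow> ennreal" and \<phi> :: "real ^ 'n \<Rightarrow> real"
    and a b :: real and c :: "real \<Rightarrow> real"
  assumes "prob_space M"
    and "distributed M lborel X f"
    and "\<phi> \<in> borel_measurable borel"
    and "a > 0" and "b > 0"
    and "\<And>\<alpha>. \<alpha> \<in> {-a<..<b} \<Longrightarrow> integrable M (\<lambda>\<omega>. exp (\<alpha> * \<phi> (X \<omega>)))"
    and "smooth_on c {-a<..<b}"
    and "log_concave_on {-a<..<b}
           (\<lambda>\<alpha>. exp (- c \<alpha>) * (\<integral>\<omega>. exp (\<alpha> * \<phi> (X \<omega>)) \<partial>M))"
  shows "\<forall>\<alpha>\<in>{-a<..<b}.
           (\<integral>\<omega>. exp (\<alpha> * (\<phi> (X \<omega>) - (\<integral>\<omega>'. \<phi> (X \<omega>') \<partial>M))) \<partial>M)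
             \<le> exp (c \<alpha> - c 0 - deriv c 0 * \<alpha>)"
proof
  interpret P: prob_space M by fact
  define I where "I = {-a<..<b}"
  define Y where "Y = (\<lambda>\<omega>. \<phi> (X \<omega>))"
  define m where "m = (\<integral>\<omega>. Y \<omega> \<partial>M)"
  define Mf where "Mf = (\<lambda>\<alpha>. \<integral>\<omega>. exp (\<alpha> * Y \<omega>) \<partial>M)"
  define G where "G = (\<lambda>\<alpha>. \<integral>\<omega>. exp (\<alpha> * (Y \<omega> - m)) \<partial>M)"
  define \<psi> where "\<psi> = (\<lambda>\<alpha>. c \<alpha> - c 0 - deriv c 0 * \<alpha>)"
  have int: "\<And>\<alpha>. \<alpha> \<in> I \<Longrightarrow> integrable M (\<lambda>\<omega>. exp (\<alpha> * Y \<omega>))"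
    using assms(6) by (simp add: I_def Y_def)
  have Xm: "X \<in> measurable M borel"
    using distributed_measurable[OF assms(2)] by simp
  have Ym[measurable]: "Y \<in> borel_measurable M"
    unfolding Y_def using measurable_compose[OF Xm assms(3)] by simp
  define t0 where "t0 = min a b / 2"
  have t0: "t0 > 0" "t0 \<in> I" "- t0 \<in> I" using assms(4,5) by (auto simp: t0_def I_def)
  have intY: "integrable M Y"
  proof (rule Bochner_Integration.integrable_bound[where f="\<lambda>\<omega>. (exp (t0 * Y \<omega>) + exp (- t0 * Y \<omega>)) / t0"])
    show "integrable M (\<lambda>\<omega>. (exp (t0 * Y \<omega>) + exp (- t0 * Y \<omega>)) / t0)"
      using int[OF t0(2)] int[OF t0(3)] by auto
    show "AE \<omega> in M. norm (Y \<omega>) \<le> norm ((exp (t0 * Y \<omega>) + exp (- t0 * Y \<omega>)) / t0)"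
    proof (rule AE_I2)
      fix \<omega>
      have "t0 * \<bar>Y \<omega>\<bar> \<le> exp (t0 * \<bar>Y \<omega>\<bar>)"
        using exp_ge_add_one_self[of "t0 * \<bar>Y \<omega>\<bar>"] by linarith
      also have "\<dots> \<le> exp (t0 * Y \<omega>) + exp (- t0 * Y \<omega>)"
        by (cases "Y \<omega> \<ge> 0") (auto simp: add_increasing add_increasing2)
      finally have "\<bar>Y \<omega>\<bar> \<le> (exp (t0 * Y \<omega>) + exp (- t0 * Y \<omega>)) / t0"
        using t0(1) by (simp add: field_simps)
      then show "norm (Y \<omega>) \<le> norm ((exp (t0 * Y \<omega>) + exp (- t0 * Y \<omega>)) / t0)"
        using t0(1) by simp
    qed
  qed simp
  have Mpos: "\<And>\<alpha>. \<alpha> \<in> I \<Longrightarrow> Mf \<alpha> > 0"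
  proof -
    fix \<alpha> assume "\<alpha> \<in> I"
    then have "exp (- c \<alpha>) * Mf \<alpha> > 0"
      using assms(8) by (auto simp: log_concave_on_def I_def Mf_def Y_def)
    then show "Mf \<alpha> > 0" by (simp add: zero_less_mult_iff)
  qed
  have GM: "\<And>\<alpha>. G \<alpha> = exp (- \<alpha> * m) * Mf \<alpha>"
  proof -
    fix \<alpha>
    have "(\<lambda>\<omega>. exp (\<alpha> * (Y \<omega> - m))) = (\<lambda>\<omega>. exp (- \<alpha> * m) * exp (\<alpha> * Y \<omega>))"
      by (rule ext) (simp add: exp_add[symmetric] algebra_simps)
    then show "G \<alpha> = exp (- \<alpha> * m) * Mf \<alpha>" by (simp add: G_def Mf_def)
  qed
  have Gge: "\<And>\<alpha>. \<alpha> \<in> I \<Longrightarrow> G \<alpha> \<ge> 1"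
  proof -
    fix \<alpha> assume a: "\<alpha> \<in> I"
    have i2: "integrable M (\<lambda>\<omega>. exp (\<alpha> * (Y \<omega> - m)))"
    proof -
      have "(\<lambda>\<omega>. exp (\<alpha> * (Y \<omega> - m))) = (\<lambda>\<omega>. exp (- \<alpha> * m) * exp (\<alpha> * Y \<omega>))"
        by (rule ext) (simp add: exp_add[symmetric] algebra_simps)
      then show ?thesis using int[OF a] by simp
    qed
    have i1: "integrable M (\<lambda>\<omega>. 1 + \<alpha> * (Y \<omega> - m))" using intY by simp
    have "(\<integral>\<omega>. 1 + \<alpha> * (Y \<omega> - m) \<partial>M) = 1"
      using intY by (simp add: Bochner_Integration.integral_add Bochner_Integration.integral_diff m_def algebra_simps P.prob_space)
    moreover have "(\<integral>\<omega>. 1 + \<alpha> * (Y \<omega> - m) \<partial>M) \<le> G \<alpha>"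
      unfolding G_def by (rule integral_mono[OF i1 i2]) (rule exp_ge_add_one_self)
    ultimately show "G \<alpha> \<ge> 1" by simp
  qed
  define H where "H = (\<lambda>\<alpha>. ln (G \<alpha>) - \<psi> \<alpha>)"
  have Hform: "\<And>\<alpha>. \<alpha> \<in> I \<Longrightarrow> H \<alpha> = ln (exp (- c \<alpha>) * Mf \<alpha>) + (c 0 + (deriv c 0 - m) * \<alpha>)"
  proof -
    fix \<alpha> assume "\<alpha> \<in> I"
    then have "Mf \<alpha> > 0" by (rule Mpos)
    then show "H \<alpha> = ln (exp (- c \<alpha>) * Mf \<alpha>) + (c 0 + (deriv c 0 - m) * \<alpha>)"
      by (simp add: H_def GM ln_mult \<psi>_def algebra_simps)
  qed
  have concL: "concave_on I (\<lambda>\<alpha>. ln (exp (- c \<alpha>) * Mf \<alpha>))"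
    using assms(8) by (simp add: log_concave_on_def I_def Mf_def Y_def)
  have concH: "concave_on I H"
  proof -
    have "concave_on I (\<lambda>\<alpha>. ln (exp (- c \<alpha>) * Mf \<alpha>) + (c 0 + (deriv c 0 - m) * \<alpha>))"
      by (rule concave_on_add_affine[OF concL])
    then have cvI: "convex I" and hh: "\<And>x y u v. x \<in> I \<Longrightarrow> y \<in> I \<Longrightarrow> u \<ge> 0 \<Longrightarrow> v \<ge> 0 \<Longrightarrow> u + v = 1 \<Longrightarrow>
        u * (ln (exp (- c x) * Mf x) + (c 0 + (deriv c 0 - m) * x)) + v * (ln (exp (- c y) * Mf y) + (c 0 + (deriv c 0 - m) * y))
        \<le> ln (exp (- c (u *\<^sub>R x + v *\<^sub>R y)) * Mf (u *\<^sub>R x + v *\<^sub>R y)) + (c 0 + (deriv c 0 - m) * (u *\<^sub>R x + v *\<^sub>R y))"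
      unfolding concave_on_iff by blast+
    show ?thesis unfolding concave_on_iff
    proof (intro conjI cvI ballI allI impI)
      fix x y u v :: real
      assume xy: "x \<in> I" "y \<in> I" "0 \<le> u" "0 \<le> v" "u + v = 1"
      then have "u *\<^sub>R x + v *\<^sub>R y \<in> I" using cvI unfolding convex_def by blast
      then show "u * H x + v * H y \<le> H (u *\<^sub>R x + v *\<^sub>R y)"
        using hh[OF xy] Hform[OF xy(1)] Hform[OF xy(2)] Hform[of "u *\<^sub>R x + v *\<^sub>R y"] by simp
    qed
  qed
  have G0: "G 0 = 1" by (simp add: G_def P.prob_space)
  have H0: "H 0 = 0" by (simp add: H_def G0 \<psi>_def)
  have lb: "\<And>s. s \<in> I \<Longrightarrow> H s \<ge> - \<psi> s"
    using Gge by (simp add: H_def)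
  have cd: "c differentiable (at 0)"
  proof -
    have "\<forall>x\<in>{-a<..<b}. ((deriv ^^ 0) c) differentiable (at x)"
      using assms(7) unfolding smooth_on_def by blast
    moreover have "(0::real) \<in> {-a<..<b}" using assms(4,5) by simp
    ultimately have "((deriv ^^ 0) c) differentiable (at 0)" by blast
    then show ?thesis by simp
  qed
  have "((\<lambda>y. (c y - c 0) / (y - 0)) \<longlongrightarrow> deriv c 0) (at 0)"
    using cd DERIV_deriv_iff_real_differentiable has_field_derivative_iff by blast
  then have "((\<lambda>y. (c y - c 0) / (y - 0) - deriv c 0) \<longlongrightarrow> 0) (at 0)"
    using tendsto_diff[of _ "deriv c 0" _ "\<lambda>_. deriv c 0" "deriv c 0"] by simp
  moreover have ev: "eventually (\<lambda>y. (c y - c 0) / (y - 0) - deriv c 0 = \<psi> y / y) (at (0::real))"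
    unfolding eventually_at_filter by (auto simp: \<psi>_def diff_divide_distrib)
  ultimately have lim: "((\<lambda>y. \<psi> y / y) \<longlongrightarrow> 0) (at 0)"
    using tendsto_cong[OF ev] by simp
  fix \<alpha> assume a: "\<alpha> \<in> {-a<..<b}"
  have "H \<alpha> \<le> 0"
    using key[OF concH[unfolded I_def] assms(4,5) H0 lb[unfolded I_def] lim a] by (simp add: I_def)
  then have "ln (G \<alpha>) \<le> \<psi> \<alpha>" by (simp add: H_def)
  moreover have "G \<alpha> > 0" using Gge[of \<alpha>] a by (simp add: I_def)
  ultimately have "G \<alpha> \<le> exp (\<psi> \<alpha>)"
    by (metis exp_le_cancel_iff exp_ln)
  then show "(\<integral>\<omega>. exp (\<alpha> * (\<phi> (X \<omega>) - (\<integral>\<omega>'. \<phi> (X \<omega>') \<partial>M))) \<partial>M)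
             \<le> exp (c \<alpha> - c 0 - deriv c 0 * \<alpha>)"
    by (simp add: G_def m_def Y_def \<psi>_def)
qed

end
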